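(* Let $A$ be any subset of ${}^\omega\omega$, equipped with the restriction of the usual ultrametric of ${}^\omega\omega$, and let $Y$ be a separable metrizable space. If $f:A\to Y$ is of Baire class $1$, then there is a sequence of full functions $f_k:A\to Y$ converging pointwise to $f$.
   Context: Work in ZF plus countable choice over the reals. ${}^\omega\omega$ is the Baire space with ultrametric $d'(x,y)=2^{-n}$, $n$ least with $x(n)\ne y(n)$. $f:A\to Y$ is of Baire class $1$ if $f^{-1}(U)\in\mathbf{\Sigma}^0_2(A)$ for every open $U\subseteq Y$. A set $B\subseteq A$ is full with constant $r>0$ if $\{y\in A: d'(x,y)<r\}\subseteq B$ for all $x\in B$; a function $g:A\to Y$ is full if it takes only finitely many values and the preimage of each value is full (with some constant). *)

theory Defs
  imports "HOL-Analysis.Analysis"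
begin

definition baire_dist :: "(nat \<Rightarrow> nat) \<Rightarrow> (nat \<Rightarrow> nat) \<Rightarrow> real" where
  "baire_dist x y = (if x = y then 0 else (1/2) ^ (LEAST n. x n \<noteq> y n))"

definition baire_sub_topology :: "(nat \<Rightarrow> nat) set \<Rightarrow> (nat \<Rightarrow> nat) topology" where
  "baire_sub_topology A = Metric_space.mtopology A baire_dist"

definition Sigma02_in :: "(nat \<Rightarrow> nat) set \<Rightarrow> (nat \<Rightarrow> nat) set \<Rightarrow> bool" where
  "Sigma02_in A S \<longleftrightarrow>
     (\<exists>F :: nat \<Rightarrow> (nat \<Rightarrow> nat) set.
        (\<forall>n. closedin (baire_sub_topology A) (F n)) \<and> S = (\<Union>n. F n))"

definition baire_class_1 ::
  "(nat \<Rightarrow> nat) set \<Rightarrow> 'b topology \<Rightarrow> ((nat \<Rightarrow> nat) \<Rightarrow> 'b) \<Rightarrow> bool" where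
  "baire_class_1 A Y f \<longleftrightarrow>
     (\<forall>x\<in>A. f x \<in> topspace Y) \<and>
     (\<forall>U. openin Y U \<longrightarrow> Sigma02_in A {x \<in> A. f x \<in> U})"

definition full_set_const :: "(nat \<Rightarrow> nat) set \<Rightarrow> real \<Rightarrow> (nat \<Rightarrow> nat) set \<Rightarrow> bool" where
  "full_set_const A r B \<longleftrightarrow> B \<subseteq> A \<and> r > 0 \<and>
     (\<forall>x\<in>B. {y \<in> A. baire_dist x y < r} \<subseteq> B)"

definition full_set :: "(nat \<Rightarrow> nat) set \<Rightarrow> (nat \<Rightarrow> nat) set \<Rightarrow> bool" where
  "full_set A B \<longleftrightarrow> (\<exists>r. full_set_const A r B)"

definition full_function ::
  "(nat \<Rightarrow> nat) set \<Rightarrow> 'b topology \<Rightarrow> ((nat \<Rightarrow> nat) \<Rightarrow> 'b) \<Rightarrow> bool" where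
  "full_function A Y g \<longleftrightarrow>
     (\<forall>x\<in>A. g x \<in> topspace Y) \<and> finite (g ` A) \<and>
     (\<forall>v \<in> g ` A. full_set A {x \<in> A. g x = v})"

end

theory Submission
  imports Defs
begin

lemma bd_agree:
  assumes "baire_dist x y < (1/2)^k" "i \<le> k"
  shows "x i = y i"
proof (rule ccontr)
  assume ne: "x i \<noteq> y i"
  hence "x \<noteq> y" by auto
  have "(LEAST n. x n \<noteq> y n) \<le> i" using ne by (rule Least_le)
  hence "(1/2::real)^k \<le> (1/2)^(LEAST n. x n \<noteq> y n)"
    using assms(2) by (intro power_decreasing) auto
  thus False using assms(1) \<open>x \<noteq> y\<close> unfolding baire_dist_def by simp
qed

lemma bd_small:
  assumes "\<And>i. i < k \<Longrightarrow> x i = y i"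
  shows "baire_dist x y \<le> (1/2)^k"
proof (cases "x = y")
  case True thus ?thesis by (simp add: baire_dist_def)
next
  case False
  then obtain j where j: "x j \<noteq> y j" by auto
  have "k \<le> (LEAST n. x n \<noteq> y n)"
  proof (rule ccontr)
    assume "\<not> ?thesis"
    hence "(LEAST n. x n \<noteq> y n) < k" by simp
    moreover have "x (LEAST n. x n \<noteq> y n) \<noteq> y (LEAST n. x n \<noteq> y n)" using j by (rule LeastI)
    ultimately show False using assms by auto
  qed
  thus ?thesis using False unfolding baire_dist_def by (simp add: power_decreasing)
qed

lemma bd_metric: "Metric_space A baire_dist"
proof
  fix x y z :: "nat \<Rightarrow> nat"
  show "0 \<le> baire_dist x y" by (simp add: baire_dist_def)
  show "baire_dist x y = baire_dist y x" unfolding baire_dist_def by (simp add: eq_commute)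
  show "baire_dist x y = 0 \<longleftrightarrow> x = y" by (simp add: baire_dist_def)
  show "baire_dist x z \<le> baire_dist x y + baire_dist y z"
  proof (cases "x = z")
    case True thus ?thesis by (simp add: baire_dist_def)
  next
    case False
    then obtain j where j: "x j \<noteq> z j" by auto
    define n where "n = (LEAST n. x n \<noteq> z n)"
    have xn: "x n \<noteq> z n" unfolding n_def using j by (rule LeastI)
    have "baire_dist x z = (1/2)^n" using False by (simp add: baire_dist_def n_def)
    moreover have "(1/2)^n \<le> baire_dist x y \<or> (1/2)^n \<le> baire_dist y z"
    proof (cases "x n = y n")
      case True
      hence "y n \<noteq> z n" using xn by simp
      have "\<forall>i<n. y i = z i \<longrightarrow> True" by simp
      show ?thesis
      proof (rule disjI2, rule ccontr)
        assume "\<not> (1/2)^n \<le> baire_dist y z"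
        hence "baire_dist y z < (1/2)^n" by simp
        hence "y n = z n" using bd_agree by blast
        thus False using \<open>y n \<noteq> z n\<close> by simp
      qed
    next
      case False
      show ?thesis
      proof (rule disjI1, rule ccontr)
        assume "\<not> (1/2)^n \<le> baire_dist x y"
        hence "baire_dist x y < (1/2)^n" by simp
        hence "x n = y n" using bd_agree by blast
        thus False using False by simp
      qed
    qed
    moreover have "0 \<le> baire_dist x y" "0 \<le> baire_dist y z" by (simp_all add: baire_dist_def)
    ultimately show ?thesis by linarith
  qed
qed

lemma closed_sep:
  assumes "closedin (baire_sub_topology A) F" "x \<in> A" "x \<notin> F"
  shows "F \<subseteq> A \<and> (\<exists>K. \<forall>y\<in>F. \<exists>i<K. y i \<noteq> x i)"
proof -
  interpret M: Metric_space A baire_dist by (rule bd_metric)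
  have FA: "F \<subseteq> A" using assms(1) closedin_subset unfolding baire_sub_topology_def by fastforce
  have "openin M.mtopology (A - F)" using assms(1) unfolding baire_sub_topology_def closedin_def by simp
  then obtain r where r: "r > 0" "M.mball x r \<subseteq> A - F"
    using assms(2,3) unfolding M.openin_mtopology by blast
  obtain K where K: "(1/2::real)^K < r" using real_arch_pow_inv[of r "1/2"] r by auto
  have "\<forall>y\<in>F. \<exists>i<K. y i \<noteq> x i"
  proof (intro ballI, rule ccontr)
    fix y assume y: "y \<in> F" "\<not> (\<exists>i<K. y i \<noteq> x i)"
    hence "baire_dist x y \<le> (1/2)^K" by (intro bd_small) auto
    hence "y \<in> M.mball x r" using K y FA assms(2) by auto
    thus False using r y by auto
  qed
  thus ?thesis using FA by blast
qed


lemma fin_min: "finite (S::nat set) \<Longrightarrow> S \<noteq> {} \<Longrightarrow> \<exists>l\<in>S. \<forall>l'\<in>S. (r::nat\<Rightarrow>real) l \<le> r l'"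
proof -
  assume "finite S" "S \<noteq> {}"
  hence "Min (r ` S) \<in> r ` S" by simp
  then obtain l where "l \<in> S" "r l = Min (r ` S)" by auto
  moreover have "\<forall>l'\<in>S. Min (r ` S) \<le> r l'" using \<open>finite S\<close> by simp
  ultimately show ?thesis by metis
qed

lemma construct:
  fixes c :: "nat \<Rightarrow> 'b" and P :: "nat \<Rightarrow> (nat \<Rightarrow> nat) set" and r :: "nat \<Rightarrow> real"
  assumes Mm: "Metric_space M m"
  and cM: "\<forall>l. c l \<in> M" and rpos: "\<forall>l. r l > (0::real)"
  and Pf: "\<forall>l. \<forall>x\<in>P l. m (c l) (f x) < r l"
  and Psep: "\<forall>l. \<forall>x\<in>A. x \<notin> P l \<longrightarrow> (\<exists>K. \<forall>y\<in>P l. \<exists>i<K. y i \<noteq> x i)"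
  and cov: "\<forall>x\<in>A. \<forall>e>0. \<exists>l. x \<in> P l \<and> r l < e"
  and fM: "\<forall>x\<in>A. f x \<in> M" and y0: "y0 \<in> M"
  shows "\<exists>fk :: nat \<Rightarrow> (nat \<Rightarrow> nat) \<Rightarrow> 'b. (\<forall>k. (\<forall>x\<in>A. fk k x \<in> M) \<and> finite (fk k ` A) \<and>
           (\<forall>v\<in>fk k ` A. full_set A {x\<in>A. fk k x = v})) \<and>
         (\<forall>x\<in>A. \<forall>e>0. \<exists>N. \<forall>k\<ge>N. m (fk k x) (f x) < e)"
proof -
  interpret Y: Metric_space M m by (rule Mm)
  define hit where "hit k x l = (l \<le> k \<and> (\<exists>y\<in>P l. \<forall>i<k. y i = x i))" for k x l
  define cand where "cand k x = {l. hit k x l \<and> (\<forall>l'<l. hit k x l' \<longrightarrow> m (c l) (c l') < r l + r l')}" for k x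
  define sel where "sel k x = (SOME l. l \<in> cand k x \<and> (\<forall>l'\<in>cand k x. r l \<le> r l'))" for k x
  define fk where "fk k x = (if cand k x = {} then y0 else c (sel k x))" for k x
  have candfin: "finite (cand k x)" for k x
    by (rule finite_subset[of _ "{..k}"]) (auto simp: cand_def hit_def)
  have sel: "sel k x \<in> cand k x \<and> (\<forall>l'\<in>cand k x. r (sel k x) \<le> r l')" if "cand k x \<noteq> {}" for k x
    unfolding sel_def by (rule someI_ex) (use fin_min[OF candfin that] in blast)
  have agree: "fk k x = fk k y" if "\<And>i. i < k \<Longrightarrow> x i = y i" for k x y
  proof -
    have "hit k x = hit k y" using that unfolding hit_def by (auto simp: fun_eq_iff)
    hence "cand k x = cand k y" unfolding cand_def by simp
    thus ?thesis unfolding fk_def sel_def by simp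
  qed
  have part1: "(\<forall>x\<in>A. fk k x \<in> M) \<and> finite (fk k ` A) \<and>
           (\<forall>v\<in>fk k ` A. full_set A {x\<in>A. fk k x = v})" for k
  proof (intro conjI ballI)
    show "fk k x \<in> M" for x using cM y0 by (simp add: fk_def)
    have "fk k ` A \<subseteq> insert y0 (c ` {..k})"
    proof
      fix v assume "v \<in> fk k ` A"
      then obtain x where "v = fk k x" by auto
      show "v \<in> insert y0 (c ` {..k})"
      proof (cases "cand k x = {}")
        case True thus ?thesis using \<open>v = fk k x\<close> by (simp add: fk_def)
      next
        case False
        hence "sel k x \<le> k" using sel[OF False] by (simp add: cand_def hit_def)
        thus ?thesis using \<open>v = fk k x\<close> False by (simp add: fk_def)
      qed
    qed
    thus "finite (fk k ` A)" by (rule finite_subset) simp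
    fix v assume "v \<in> fk k ` A"
    show "full_set A {x\<in>A. fk k x = v}"
      unfolding full_set_def full_set_const_def
    proof (intro exI conjI ballI subsetI)
      show "(0::real) < (1/2)^k" by simp
      fix x y assume x: "x \<in> {x\<in>A. fk k x = v}" and y: "y \<in> {y\<in>A. baire_dist x y < (1/2)^k}"
      have "fk k x = fk k y" by (rule agree) (use bd_agree y in auto)
      thus "y \<in> {x\<in>A. fk k x = v}" using x y by auto
    qed auto
  qed
  have part2: "\<exists>N. \<forall>k\<ge>N. m (fk k x) (f x) < e" if x: "x \<in> A" and e: "e > 0" for x e
  proof -
    obtain ls where ls: "x \<in> P ls" "r ls < e/3" using cov x e by (meson divide_pos_pos zero_less_numeral)
    have "\<forall>l'\<in>{l'. l' < ls \<and> x \<notin> P l'}. \<exists>K. \<forall>y\<in>P l'. \<exists>i<K. y i \<noteq> x i"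
      using Psep x by auto
    then obtain Kf where Kf: "\<And>l'. l' < ls \<Longrightarrow> x \<notin> P l' \<Longrightarrow> \<forall>y\<in>P l'. \<exists>i<Kf l'. y i \<noteq> x i"
      by (metis (no_types, lifting) mem_Collect_eq)
    define N where "N = ls + (\<Sum>l'<ls. Kf l')"
    have "m (fk k x) (f x) < e" if k: "k \<ge> N" for k
    proof -
      have lsk: "ls \<le> k" using k by (simp add: N_def)
      have hitiff: "hit k x l' \<longleftrightarrow> x \<in> P l'" if "l' \<le> ls" for l'
      proof
        assume h: "hit k x l'"
        show "x \<in> P l'"
        proof (rule ccontr)
          assume nx: "x \<notin> P l'"
          hence "l' < ls" using that ls by (cases "l' = ls") auto
          have "Kf l' \<le> (\<Sum>l'<ls. Kf l')"
            by (rule member_le_sum) (use \<open>l' < ls\<close> in auto)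
          hence "Kf l' \<le> k" using k by (simp add: N_def)
          from h obtain y where "y \<in> P l'" "\<forall>i<k. y i = x i" by (auto simp: hit_def)
          thus False using Kf[OF \<open>l' < ls\<close> nx] \<open>Kf l' \<le> k\<close> by fastforce
        qed
      next
        assume "x \<in> P l'" thus "hit k x l'" using that lsk by (auto simp: hit_def)
      qed
      have dfx: "m (c l) (f x) < r l" if "x \<in> P l" for l using Pf that by blast
      have lscand: "ls \<in> cand k x"
        unfolding cand_def
      proof (intro CollectI conjI allI impI)
        show "hit k x ls" using hitiff ls by simp
        fix l' assume "l' < ls" "hit k x l'"
        hence "x \<in> P l'" using hitiff by simp
        have "m (c ls) (c l') \<le> m (c ls) (f x) + m (f x) (c l')"
          using Y.triangle cM fM x by blast
        also have "\<dots> < r ls + r l'" using dfx[OF ls(1)] dfx[OF \<open>x \<in> P l'\<close>] Y.commute[of "f x" "c l'"] by linarith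
        finally show "m (c ls) (c l') < r ls + r l'" .
      qed
      hence ne: "cand k x \<noteq> {}" by auto
      define s where "s = sel k x"
      have s: "s \<in> cand k x" "r s \<le> r ls" using sel[OF ne] lscand by (auto simp: s_def)
      have fk: "fk k x = c s" using ne by (simp add: fk_def s_def)
      show ?thesis
      proof (cases "s \<le> ls")
        case True
        hence "x \<in> P s" using hitiff s(1) by (simp add: cand_def)
        hence "m (c s) (f x) < r s" by (rule dfx)
        thus ?thesis unfolding fk using s(2) ls(2) e by linarith
      next
        case False
        hence "m (c s) (c ls) < r s + r ls" using s(1) hitiff ls(1) by (auto simp: cand_def)
        moreover have "m (c s) (f x) \<le> m (c s) (c ls) + m (c ls) (f x)"
          using Y.triangle cM fM x by blast
        ultimately show ?thesis unfolding fk using dfx[OF ls(1)] s(2) ls(2) by linarith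
      qed
    qed
    thus ?thesis by blast
  qed
  have "(\<forall>k. (\<forall>x\<in>A. fk k x \<in> M) \<and> finite (fk k ` A) \<and> (\<forall>v\<in>fk k ` A. full_set A {x\<in>A. fk k x = v})) \<and> (\<forall>x\<in>A. \<forall>e>0. \<exists>N. \<forall>k\<ge>N. m (fk k x) (f x) < e)" using part1 part2 by blast
  thus ?thesis by blast
qed


theorem mainTheorem14:
  fixes A :: "(nat \<Rightarrow> nat) set"
    and Y :: "'b topology"
    and f :: "(nat \<Rightarrow> nat) \<Rightarrow> 'b"
  assumes "separable_space Y" and "metrizable_space Y"
    and "baire_class_1 A Y f"
  shows "\<exists>fk :: nat \<Rightarrow> (nat \<Rightarrow> nat) \<Rightarrow> 'b.
           (\<forall>k. full_function A Y (fk k)) \<and>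
           (\<forall>x\<in>A. limitin Y (\<lambda>k. fk k x) (f x) sequentially)"
proof (cases "A = {}")
  case True
  show ?thesis by (rule exI[where x="\<lambda>k x. undefined"]) (simp add: True full_function_def)
next
  case False
  then obtain a where aA: "a \<in> A" by auto
  obtain M m where Mm: "Metric_space M m" and Yeq: "Y = Metric_space.mtopology M m"
    using assms(2) unfolding metrizable_space_def by blast
  interpret Y: Metric_space M m by (rule Mm)
  have tsY: "topspace Y = M" using Yeq by simp
  have fM: "\<forall>x\<in>A. f x \<in> M" using assms(3) tsY by (simp add: baire_class_1_def)
  have pre: "Sigma02_in A {x \<in> A. f x \<in> U}" if "openin Y U" for U
    using assms(3) that by (simp add: baire_class_1_def)
  obtain D where D: "countable D" "D \<subseteq> M" "Y closure_of D = M"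
    using assms(1) tsY unfolding separable_space_def by blast
  have dense: "\<exists>d\<in>D. m d y < e" if "y \<in> M" "e > 0" for y e
  proof -
    have "y \<in> Y closure_of D" using D that by simp
    moreover have "openin Y (Y.mball y e)" "y \<in> Y.mball y e" using Yeq that by auto
    ultimately obtain d where "d \<in> D" "d \<in> Y.mball y e" unfolding in_closure_of by blast
    thus ?thesis using Y.commute by auto
  qed
  have Dne: "D \<noteq> {}" using dense[of "f a" 1] fM aA by auto
  define Fs where "Fs d i = (SOME F :: nat \<Rightarrow> (nat \<Rightarrow> nat) set.
      (\<forall>n. closedin (baire_sub_topology A) (F n)) \<and>
      {x \<in> A. f x \<in> Y.mball d (inverse (Suc i))} = (\<Union>n. F n))" for d i
  have Fs: "(\<forall>n. closedin (baire_sub_topology A) (Fs d i n)) \<and>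
      {x \<in> A. f x \<in> Y.mball d (inverse (Suc i))} = (\<Union>n. Fs d i n)" for d i
  proof -
    have "openin Y (Y.mball d (inverse (Suc i)))" using Yeq by simp
    hence "Sigma02_in A {x \<in> A. f x \<in> Y.mball d (inverse (Suc i))}" by (rule pre)
    thus ?thesis unfolding Fs_def Sigma02_in_def by (rule someI_ex)
  qed
  define c where "c l = from_nat_into D (fst (prod_decode l))" for l
  define r where "r l = inverse (real (Suc (fst (prod_decode (snd (prod_decode l))))))" for l
  define P where "P l = Fs (c l) (fst (prod_decode (snd (prod_decode l)))) (snd (prod_decode (snd (prod_decode l))))" for l
  have cM: "\<forall>l. c l \<in> M" using D(2) from_nat_into[OF Dne] by (auto simp: c_def)
  have rpos: "\<forall>l. r l > 0" by (simp add: r_def)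
  have Pf: "\<forall>l. \<forall>x\<in>P l. m (c l) (f x) < r l"
  proof (intro allI ballI)
    fix l x assume "x \<in> P l"
    hence "x \<in> {x \<in> A. f x \<in> Y.mball (c l) (r l)}" using Fs unfolding P_def r_def by blast
    thus "m (c l) (f x) < r l" by simp
  qed
  have Psep: "\<forall>l. \<forall>x\<in>A. x \<notin> P l \<longrightarrow> (\<exists>K. \<forall>y\<in>P l. \<exists>i<K. y i \<noteq> x i)"
    using closed_sep Fs unfolding P_def by blast
  have cov: "\<forall>x\<in>A. \<forall>e>0. \<exists>l. x \<in> P l \<and> r l < e"
  proof (intro ballI allI impI)
    fix x e assume x: "x \<in> A" and e: "(e::real) > 0"
    obtain i where i: "inverse (real (Suc i)) < e" using reals_Archimedean[OF e] by auto
    obtain d where d: "d \<in> D" "m d (f x) < inverse (real (Suc i))"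
      using dense[of "f x" "inverse (real (Suc i))"] fM x by auto
    obtain j where j: "from_nat_into D j = d" using from_nat_into_surj[OF D(1) d(1)] by auto
    have "x \<in> {x \<in> A. f x \<in> Y.mball d (inverse (Suc i))}" using x d D(2) fM by auto
    then obtain n where n: "x \<in> Fs d i n" using Fs by blast
    define l where "l = prod_encode (j, prod_encode (i, n))"
    have "c l = d" "r l = inverse (real (Suc i))" "P l = Fs d i n"
      by (simp_all add: l_def c_def r_def P_def j)
    thus "\<exists>l. x \<in> P l \<and> r l < e" using n i by metis
  qed
  obtain fk :: "nat \<Rightarrow> (nat \<Rightarrow> nat) \<Rightarrow> 'b" where
    fk1: "\<And>k. (\<forall>x\<in>A. fk k x \<in> M) \<and> finite (fk k ` A) \<and>
           (\<forall>v\<in>fk k ` A. full_set A {x\<in>A. fk k x = v})" and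
    fk2: "\<forall>x\<in>A. \<forall>e>0. \<exists>N. \<forall>k\<ge>N. m (fk k x) (f x) < e"
    using construct[OF Mm cM rpos Pf Psep cov fM, of "f a"] fM aA by blast
  have "\<forall>k. full_function A Y (fk k)" using fk1 tsY by (simp add: full_function_def)
  moreover have "\<forall>x\<in>A. limitin Y (\<lambda>k. fk k x) (f x) sequentially"
    unfolding Yeq Y.limitin_metric eventually_sequentially
    using fk1 fk2 fM by blast
  ultimately show ?thesis by blast
qed

end
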